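(* Let $\kappa > 3/2$ and $T_\mathrm{eff} > 0$ (temperatures in energy units), set $T_0 = (\kappa-3/2)T_\mathrm{eff}$, $T_\mathrm{core} = \frac{\kappa-3/2}{\kappa}T_\mathrm{eff}$ and $R_0 = \frac{\kappa}{\kappa-3/2} = T_\mathrm{eff}/T_\mathrm{core}$. Let $f_\kappa$ be the probability density on $(0,\infty)$ $$f_\kappa(E) = \frac{2}{\sqrt{\pi}}\,\frac{\Gamma(\kappa+1)}{\Gamma(\kappa-\tfrac12)}\,T_0^{-3/2}\,\sqrt{E}\,\Bigl(1+\frac{E}{T_0}\Bigr)^{-(\kappa+1)},$$ and for $T>0$ let $f_\mathrm{Mxw}(T)$ be the Maxwellian energy density $f_\mathrm{Mxw}(E;T) = \frac{2}{\sqrt{\pi}}T^{-3/2}\sqrt{E}\,e^{-E/T}$. Let $D_\mathrm{KL}(p\,\|\,q) = \int_0^\infty p\ln(p/q)\,dE$. Then $$\Delta D_\mathrm{KL} \equiv D_\mathrm{KL}\bigl(f_\kappa\,\|\,f_\mathrm{Mxw}(T_\mathrm{core})\bigr) - D_\mathrm{KL}\bigl(f_\kappa\,\|\,f_\mathrm{Mxw}(T_\mathrm{eff})\bigr) = \frac32\bigl[R_0 - \ln R_0 - 1\bigr] = \frac32\,d_\mathrm{IS}(T_\mathrm{eff},T_\mathrm{core}),$$ and moreover $\Delta D_\mathrm{KL} = D_\mathrm{KL}\bigl(f_\mathrm{Mxw}(T_\mathrm{eff})\,\|\,f_\mathrm{Mxw}(T_\mathrm{core})\bigr)$.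
   Context: $d_\mathrm{IS}(x,y) = x/y - \ln(x/y) - 1$ denotes the Itakura–Saito distance for $x,y>0$. The density $f_\kappa$ has mean energy $\langle E\rangle_{f_\kappa} = \tfrac32 T_\mathrm{eff}$ for all $\kappa>3/2$, so $f_\mathrm{Mxw}(T_\mathrm{eff})$ is the Maxwellian with the same mean energy as $f_\kappa$. *)

theory Defs
  imports "HOL-Analysis.Analysis"
begin

definition d_IS :: "real \<Rightarrow> real \<Rightarrow> real" where
  "d_IS x y = x / y - ln (x / y) - 1"

definition f_kappa :: "real \<Rightarrow> real \<Rightarrow> real \<Rightarrow> real" where
  "f_kappa \<kappa> Teff E =
     (let T0 = (\<kappa> - 3/2) * Teff in
      2 / sqrt pi * (Gamma (\<kappa> + 1) / Gamma (\<kappa> - 1/2)) * T0 powr (-(3/2))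
        * sqrt E * (1 + E / T0) powr (-(\<kappa> + 1)))"

definition f_Mxw :: "real \<Rightarrow> real \<Rightarrow> real" where
  "f_Mxw T E = 2 / sqrt pi * T powr (-(3/2)) * sqrt E * exp (- E / T)"

definition D_KL :: "(real \<Rightarrow> real) \<Rightarrow> (real \<Rightarrow> real) \<Rightarrow> real" where
  "D_KL p q = (LBINT E:{0<..}. p E * ln (p E / q E))"

end

theory Submission imports Defs begin

lemma nn_SUP_union:
  fixes h :: "real \<Rightarrow> real" and c :: "nat \<Rightarrow> real"
  assumes hm: "h \<in> borel_measurable borel" and inc: "incseq c"
    and A: "A = (\<Union>n. {a..c n})"
  shows "(\<integral>\<^sup>+x. ennreal (h x * indicator A x) \<partial>lborel)
       = (SUP n. \<integral>\<^sup>+x. ennreal (h x * indicator {a..c n} x) \<partial>lborel)"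
proof -
  let ?F = "\<lambda>n x. ennreal (h x * indicator {a..c n} x)"
  have incF: "incseq ?F"
  proof (rule incseq_SucI, rule le_funI)
    fix n x
    have "c n \<le> c (Suc n)" using inc by (simp add: incseq_SucD)
    then show "?F n x \<le> ?F (Suc n) x"
      by (cases "h x \<ge> 0") (auto simp: indicator_def ennreal_neg)
  qed
  have meas: "\<And>n. ?F n \<in> borel_measurable lborel" using hm by measurable
  have pt: "(SUP n. ?F n x) = ennreal (h x * indicator A x)" for x
  proof (cases "x \<in> A")
    case True
    then obtain m where m: "x \<in> {a..c m}" using A by auto
    show ?thesis
    proof (rule antisym)
      show "(SUP n. ?F n x) \<le> ennreal (h x * indicator A x)"
        using True by (intro SUP_least) (auto simp: indicator_def intro: ennreal_leI)
      show "ennreal (h x * indicator A x) \<le> (SUP n. ?F n x)"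
        using True m by (intro SUP_upper2[of m]) (auto simp: indicator_def)
    qed
  next
    case False
    then have "\<And>n. x \<notin> {a..c n}" using A by auto
    then have "\<And>n. ?F n x = 0" by (auto simp: indicator_def)
    then show ?thesis using False by (simp add: indicator_def)
  qed
  have "(\<integral>\<^sup>+x. ennreal (h x * indicator A x) \<partial>lborel) = (\<integral>\<^sup>+x. (SUP n. ?F n x) \<partial>lborel)"
    by (simp add: pt)
  also have "\<dots> = (SUP n. \<integral>\<^sup>+x. ?F n x \<partial>lborel)"
    by (rule nn_integral_monotone_convergence_SUP[OF incF meas])
  finally show ?thesis .
qed

lemma beta_alg:
  fixes a b T t :: real
  assumes "a > 0" "b > 0" "T > 0" "0 < t" "t < 1"
  shows "((T*t/(1-t)) powr (a-1) * (1 + (T*t/(1-t))/T) powr (-(a+b))) * (T/(1-t)^2)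
         = T powr a * (t powr (a-1) * (1-t) powr (b-1))"
proof -
  define u where "u = 1 - t"
  have u: "u > 0" "t = 1 - u" using assms by (auto simp: u_def)
  have e1: "(T*t/u) powr (a-1) = T powr (a-1) * t powr (a-1) / u powr (a-1)"
    using u assms by (simp add: powr_mult powr_divide)
  have "1 + (T*t/u)/T = inverse u" using u assms by (simp add: field_simps)
  then have e2: "(1 + (T*t/u)/T) powr (-(a+b)) = u powr (a+b)"
  proof -
    have "u powr (-(a+b)) = inverse (u powr (a+b))" by (rule powr_minus)
    moreover have "(inverse u) powr (-(a+b)) = inverse (u powr (-(a+b)))"
      using u by (simp add: powr_divide inverse_eq_divide)
    ultimately show ?thesis using \<open>1 + (T*t/u)/T = inverse u\<close> by simp
  qed
  have e3: "T/u^2 = T / u powr 2" using u by (simp add: powr_realpow)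
  have "T powr (a-1) * T = T powr a" using assms by (simp add: powr_diff)
  moreover have "u powr (a+b) / (u powr (a-1) * u powr 2) = u powr (b-1)"
  proof -
    have "u powr (a-1) * u powr 2 = u powr (a - 1 + 2)" by (simp only: powr_add)
    also have "a - 1 + 2 = a + 1" by simp
    finally have "u powr (a-1) * u powr 2 = u powr (a+1)" .
    moreover have "u powr (a+b) / u powr (a+1) = u powr (b-1)"
      by (simp add: powr_diff[symmetric])
    ultimately show ?thesis by simp
  qed
  moreover have "T powr (a-1) * t powr (a-1) / u powr (a-1) * u powr (a+b) * (T / u powr 2)
     = (T powr (a-1) * T) * t powr (a-1) * (u powr (a+b) / (u powr (a-1) * u powr 2))"
    by simp
  ultimately have "T powr (a-1) * t powr (a-1) / u powr (a-1) * u powr (a+b) * (T / u powr 2)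
     = T powr a * (t powr (a-1) * u powr (b-1))"
    by simp
  then show ?thesis unfolding u_def[symmetric] e1 e2 e3 by simp
qed

lemma union_Icc_nat: assumes "T > 0" shows "{0::real..} = (\<Union>n. {0..T * real n})"
proof (intro equalityI subsetI)
  fix x :: real assume "x \<in> {0..}"
  obtain n where "x / T \<le> real n" using real_arch_simple by blast
  then have "x \<le> T * real n" using \<open>T > 0\<close> by (simp add: field_simps)
  then show "x \<in> (\<Union>n. {0..T * real n})" using \<open>x \<in> {0..}\<close> by auto
qed auto

lemma union_Icc_frac: "{0::real..<1} = (\<Union>n. {0..real n / (real n + 1)})"
proof (intro equalityI subsetI)
  fix x :: real assume x: "x \<in> {0..<1}"
  obtain n where "x / (1 - x) \<le> real n" using real_arch_simple by blast
  then have "x \<le> real n / (real n + 1)" using x by (simp add: field_simps)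
  then show "x \<in> (\<Union>n. {0..real n / (real n + 1)})" using x by auto
next
  fix x :: real assume "x \<in> (\<Union>n. {0..real n / (real n + 1)})"
  then obtain n where "x \<in> {0..real n / (real n + 1)}" by blast
  then have x: "0 \<le> x" "x \<le> real n / (real n + 1)" by auto
  have lt: "real n / (real n + 1) < 1" by simp
  have "x < 1" using x(2) lt by linarith
  then show "x \<in> {0..<1}" using x(1) by simp
qed

lemma beta_nn:
  fixes a b T :: real
  assumes a: "a > 0" and b: "b > 0" and T: "T > 0"
  shows "(\<integral>\<^sup>+x. ennreal ((x powr (a-1) * (1 + x/T) powr (-(a+b))) * indicator {0..} x) \<partial>lborel)
         = ennreal (T powr a * Beta a b)"
proof -
  define h where "h x = x powr (a-1) * (1 + x/T) powr (-(a+b))" for x :: real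
  define k where "k t = t powr (a-1) * (1-t) powr (b-1)" for t :: real
  define g where "g t = T*t/(1-t)" for t :: real
  define g' where "g' t = T/(1-t)^2" for t :: real
  define bn where "bn n = real n / (real n + 1)" for n :: nat
  have hm: "h \<in> borel_measurable borel" unfolding h_def by measurable
  have km: "(\<lambda>t. T powr a * k t) \<in> borel_measurable borel" unfolding k_def by measurable
  have bn1: "bn n < 1" for n unfolding bn_def by simp
  have bn0: "0 \<le> bn n" for n unfolding bn_def by simp
  have gbn: "g (bn n) = T * real n" for n
    unfolding g_def bn_def by (simp add: field_simps)
  have step: "(\<integral>\<^sup>+x. ennreal (h x * indicator {0..T * real n} x) \<partial>lborel)
      = (\<integral>\<^sup>+t. ennreal (T powr a * k t * indicator {0..bn n} t) \<partial>lborel)" for n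
  proof -
    have "(\<integral>\<^sup>+x. ennreal (h x * indicator {g 0..g (bn n)} x) \<partial>lborel)
        = (\<integral>\<^sup>+t. ennreal (h (g t) * g' t * indicator {0..bn n} t) \<partial>lborel)"
    proof (rule nn_integral_substitution)
      show "set_borel_measurable borel {g 0..g (bn n)} h"
        using hm by (simp add: set_borel_measurable_def)
      show "(g has_real_derivative g' x) (at x)" if "x \<in> {0..bn n}" for x
      proof -
        have "x < 1" using that bn1[of n] by auto
        then show ?thesis unfolding g_def g'_def
          by (auto intro!: derivative_eq_intros simp: field_simps power2_eq_square)
      qed
      show "continuous_on {0..bn n} g'"
        unfolding g'_def using bn1[of n] by (intro continuous_intros) auto
      show "0 \<le> g' x" if "x \<in> {0..bn n}" for x unfolding g'_def using T by simp
      show "0 \<le> bn n" by (rule bn0)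
    qed
    also have "\<dots> = (\<integral>\<^sup>+t. ennreal (T powr a * k t * indicator {0..bn n} t) \<partial>lborel)"
    proof (rule nn_integral_cong)
      fix t :: real
      show "ennreal (h (g t) * g' t * indicator {0..bn n} t) = ennreal (T powr a * k t * indicator {0..bn n} t)"
      proof (cases "t \<in> {0..bn n}")
        case True
        then have t1: "t < 1" "0 \<le> t" using bn1[of n] by auto
        show ?thesis
        proof (cases "t = 0")
          case True then show ?thesis by (simp add: h_def k_def g_def)
        next
          case False
          then show ?thesis using beta_alg[OF a b T _ t1(1)] t1 True
            by (simp add: h_def k_def g_def g'_def)
        qed
      qed simp
    qed
    finally show ?thesis using gbn by (simp add: g_def)
  qed
  have "(\<integral>\<^sup>+x. ennreal (h x * indicator {0..} x) \<partial>lborel)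
      = (SUP n. \<integral>\<^sup>+x. ennreal (h x * indicator {0..T * real n} x) \<partial>lborel)"
    by (rule nn_SUP_union[OF hm _ union_Icc_nat[OF T]]) (auto simp: incseq_def T intro!: mult_left_mono)
  also have "\<dots> = (SUP n. \<integral>\<^sup>+t. ennreal (T powr a * k t * indicator {0..bn n} t) \<partial>lborel)"
    using step by simp
  also have "\<dots> = (\<integral>\<^sup>+t. ennreal (T powr a * k t * indicator {0..<1} t) \<partial>lborel)"
  proof (rule nn_SUP_union[OF km, symmetric])
    show "incseq bn" unfolding incseq_def bn_def by (auto simp: field_simps)
    show "{0..<1} = (\<Union>n. {0..bn n})" unfolding bn_def by (rule union_Icc_frac)
  qed
  also have "\<dots> = (\<integral>\<^sup>+t. ennreal (T powr a) * (ennreal (k t) * indicator {0..1} t) \<partial>lborel)"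
  proof (rule nn_integral_cong)
    fix t :: real
    have "k 1 = 0" by (simp add: k_def)
    moreover have "k t \<ge> 0" by (simp add: k_def)
    ultimately show "ennreal (T powr a * k t * indicator {0..<1} t) = ennreal (T powr a) * (ennreal (k t) * indicator {0..1} t)"
      by (cases "t = 1") (auto simp: indicator_def ennreal_mult)
  qed
  also have "\<dots> = ennreal (T powr a) * (\<integral>\<^sup>+t. ennreal (k t) * indicator {0..1} t \<partial>lborel)"
    by (rule nn_integral_cmult) (use km in \<open>simp add: k_def\<close>)
  also have "(\<integral>\<^sup>+t. ennreal (k t) * indicator {0..1} t \<partial>lborel) = ennreal (Beta a b)"
    using nn_integral_has_integral_lebesgue'[OF _ has_integral_Beta_real[OF a b]]
    by (simp add: k_def)
  finally have fin: "(\<integral>\<^sup>+x. ennreal (h x * indicator {0..} x) \<partial>lborel) = ennreal (T powr a) * ennreal (Beta a b)" .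
  have "Beta a b > 0" using a b by (simp add: Beta_def Gamma_real_pos)
  then have eq: "ennreal (T powr a) * ennreal (Beta a b) = ennreal (T powr a * Beta a b)"
    using T by (simp add: ennreal_mult)
  show ?thesis using fin unfolding eq h_def .
qed

lemma gamma_nn:
  fixes a T :: real
  assumes a: "a > 0" and T: "T > 0"
  shows "(\<integral>\<^sup>+x. ennreal (x powr (a-1) * exp (-x/T) * indicator {0..} x) \<partial>lborel)
         = ennreal (T powr a * Gamma a)"
proof -
  let ?F = "\<lambda>x. ennreal (x powr (a-1) * exp (-x/T) * indicator {0..} x)"
  have Fm: "?F \<in> borel_measurable borel" by measurable
  have "(\<integral>\<^sup>+x. ?F x \<partial>lborel) = ennreal \<bar>T\<bar> * (\<integral>\<^sup>+x. ?F (0 + T * x) \<partial>lborel)"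
    using nn_integral_real_affine[OF Fm, of T 0] T by simp
  also have "(\<integral>\<^sup>+x. ?F (0 + T * x) \<partial>lborel)
      = (\<integral>\<^sup>+x. ennreal (T powr (a-1)) * ennreal (indicator {0..} x * x powr (a - 1) / exp x) \<partial>lborel)"
  proof (rule nn_integral_cong)
    fix x :: real
    show "?F (0 + T * x) = ennreal (T powr (a-1)) * ennreal (indicator {0..} x * x powr (a - 1) / exp x)"
    proof (cases "x \<ge> 0")
      case True
      then have "(T*x) powr (a-1) = T powr (a-1) * x powr (a-1)" using T by (simp add: powr_mult)
      moreover have "exp (-(T*x)/T) = inverse (exp x)" using T by (simp add: exp_minus)
      ultimately show ?thesis using True T
        by (simp add: ennreal_mult[symmetric] divide_inverse mult_ac zero_le_mult_iff)
    next
      case False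
      then have "\<not> T * x \<ge> 0" using T by (simp add: zero_le_mult_iff)
      then show ?thesis using False by (simp add: indicator_def)
    qed
  qed
  also have "\<dots> = ennreal (T powr (a-1)) * ennreal (Gamma a)"
    by (subst nn_integral_cmult) (simp_all add: Gamma_conv_nn_integral_real[OF a])
  finally have "(\<integral>\<^sup>+x. ?F x \<partial>lborel) = ennreal T * (ennreal (T powr (a-1)) * ennreal (Gamma a))"
    using T by simp
  also have "\<dots> = ennreal (T powr a * Gamma a)"
  proof -
    have "T * T powr (a-1) = T powr a" using T by (simp add: powr_diff)
    moreover have "Gamma a > 0" using a by (simp add: Gamma_real_pos)
    ultimately show ?thesis using T by (simp add: ennreal_mult[symmetric] mult.assoc[symmetric])
  qed
  finally show ?thesis .
qed

lemma beta_bochner: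
  fixes a b T :: real
  assumes a: "a > 0" and b: "b > 0" and T: "T > 0"
  shows "has_bochner_integral lborel (\<lambda>x. indicator {0<..} x * (x powr (a-1) * (1 + x/T) powr (-(a+b))))
           (T powr a * Beta a b)"
proof (rule has_bochner_integral_nn_integral)
  show "(\<lambda>x. indicator {0<..} x * (x powr (a-1) * (1 + x/T) powr (-(a+b)))) \<in> borel_measurable lborel"
    by measurable
  show "AE x in lborel. 0 \<le> indicator {0<..} x * (x powr (a-1) * (1 + x/T) powr (-(a+b)))"
    by (auto simp: indicator_def)
  have "Beta a b > 0" using a b by (simp add: Beta_def Gamma_real_pos)
  then show "0 \<le> T powr a * Beta a b" by simp
  have "(\<integral>\<^sup>+x. ennreal (indicator {0<..} x * (x powr (a-1) * (1 + x/T) powr (-(a+b)))) \<partial>lborel)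
      = (\<integral>\<^sup>+x. ennreal ((x powr (a-1) * (1 + x/T) powr (-(a+b))) * indicator {0..} x) \<partial>lborel)"
    by (rule nn_integral_cong) (auto simp: indicator_def)
  then show "(\<integral>\<^sup>+x. ennreal (indicator {0<..} x * (x powr (a-1) * (1 + x/T) powr (-(a+b)))) \<partial>lborel)
      = ennreal (T powr a * Beta a b)" using beta_nn[OF a b T] by simp
qed

lemma gamma_bochner:
  fixes a T :: real
  assumes a: "a > 0" and T: "T > 0"
  shows "has_bochner_integral lborel (\<lambda>x. indicator {0<..} x * (x powr (a-1) * exp (-x/T)))
           (T powr a * Gamma a)"
proof (rule has_bochner_integral_nn_integral)
  show "(\<lambda>x. indicator {0<..} x * (x powr (a-1) * exp (-x/T))) \<in> borel_measurable lborel"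
    by measurable
  show "AE x in lborel. 0 \<le> indicator {0<..} x * (x powr (a-1) * exp (-x/T))"
    by (auto simp: indicator_def)
  have "Gamma a > 0" using a by (simp add: Gamma_real_pos)
  then show "0 \<le> T powr a * Gamma a" by simp
  have "(\<integral>\<^sup>+x. ennreal (indicator {0<..} x * (x powr (a-1) * exp (-x/T))) \<partial>lborel)
      = (\<integral>\<^sup>+x. ennreal (x powr (a-1) * exp (-x/T) * indicator {0..} x) \<partial>lborel)"
    by (rule nn_integral_cong) (auto simp: indicator_def)
  then show "(\<integral>\<^sup>+x. ennreal (indicator {0<..} x * (x powr (a-1) * exp (-x/T))) \<partial>lborel)
      = ennreal (T powr a * Gamma a)" using gamma_nn[OF a T] by simp
qed

definition Ck :: "real \<Rightarrow> real \<Rightarrow> real" where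
  "Ck \<kappa> Teff = 2 / sqrt pi * (Gamma (\<kappa> + 1) / Gamma (\<kappa> - 1/2)) * ((\<kappa> - 3/2) * Teff) powr (-(3/2))"

definition Cm :: "real \<Rightarrow> real" where
  "Cm T = 2 / sqrt pi * T powr (-(3/2))"

lemma Gamma_three_halves: "Gamma (3/2::real) = sqrt pi / 2"
  using Gamma_plus1[of "1/2::real"] Gamma_one_half_real nonpos_Ints_nonpos[of "1/2::real"] by force

lemma Gamma_five_halves: "Gamma (5/2::real) = 3/4 * sqrt pi"
  using Gamma_plus1[of "3/2::real"] Gamma_three_halves nonpos_Ints_nonpos[of "3/2::real"] by force

lemma f_kappa_pos_form:
  "E > 0 \<Longrightarrow> f_kappa \<kappa> Teff E = Ck \<kappa> Teff * sqrt E * (1 + E / ((\<kappa> - 3/2) * Teff)) powr (-(\<kappa>+1))"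
  unfolding f_kappa_def Ck_def Let_def by simp

lemma f_Mxw_form: "f_Mxw T E = Cm T * sqrt E * exp (- E / T)"
  unfolding f_Mxw_def Cm_def by simp

lemma Ck_pos: "\<kappa> > 3/2 \<Longrightarrow> Teff > 0 \<Longrightarrow> Ck \<kappa> Teff > 0"
  unfolding Ck_def by (auto intro!: mult_pos_pos divide_pos_pos Gamma_real_pos)

lemma Cm_pos: "T > 0 \<Longrightarrow> Cm T > 0"
  unfolding Cm_def by auto

lemma kappa_A:
  assumes k: "\<kappa> > 3/2" and T: "Teff > 0"
  shows "has_bochner_integral lborel (\<lambda>E. indicator {0<..} E * f_kappa \<kappa> Teff E) 1"
proof -
  define T0 where "T0 = (\<kappa> - 3/2) * Teff"
  have T0: "T0 > 0" using k T by (simp add: T0_def)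
  have hb: "has_bochner_integral lborel
     (\<lambda>x. Ck \<kappa> Teff * (indicator {0<..} x * (x powr (3/2-1) * (1 + x/T0) powr (-(3/2+(\<kappa>-1/2))))))
     (Ck \<kappa> Teff * (T0 powr (3/2) * Beta (3/2) (\<kappa>-1/2)))"
    by (rule has_bochner_integral_mult_right, rule beta_bochner) (use k T0 in auto)
  have val: "Ck \<kappa> Teff * (T0 powr (3/2) * Beta (3/2) (\<kappa>-1/2)) = 1"
  proof -
    define G1 where "G1 = Gamma (\<kappa> + 1)"
    define G2 where "G2 = Gamma (\<kappa> - 1/2)"
    have g1: "G1 > 0" "G2 > 0" using k by (auto simp: G1_def G2_def intro: Gamma_real_pos)
    have p: "T0 powr (-(3/2)) * T0 powr (3/2) = 1" using T0 by (simp add: powr_add[symmetric])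
    have B: "Beta (3/2) (\<kappa>-1/2) = (sqrt pi / 2) * (G2 / G1)"
    proof -
      have e: "3/2 + (\<kappa> - 1/2) = \<kappa> + 1" by simp
      show ?thesis unfolding Beta_def Gamma_three_halves e G1_def G2_def by simp
    qed
    have C: "Ck \<kappa> Teff = 2 / sqrt pi * (G1 / G2) * T0 powr (-(3/2))"
      unfolding Ck_def G1_def G2_def T0_def ..
    have "Ck \<kappa> Teff * (T0 powr (3/2) * Beta (3/2) (\<kappa>-1/2))
        = (2 / sqrt pi * (sqrt pi / 2)) * ((G1 / G2) * (G2 / G1)) * (T0 powr (-(3/2)) * T0 powr (3/2))"
      unfolding C B by (simp only: mult_ac)
    also have "\<dots> = 1" using g1 p by simp
    finally show ?thesis .
  qed
  show ?thesis
  proof (rule has_bochner_integral_cong[THEN iffD1, OF refl _ val hb])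
    fix x :: real
    show "Ck \<kappa> Teff * (indicator {0<..} x * (x powr (3/2-1) * (1 + x/T0) powr (-(3/2+(\<kappa>-1/2)))))
       = indicator {0<..} x * f_kappa \<kappa> Teff x"
    proof (cases "x > 0")
      case True
      have e1: "3/2-1 = (1/2::real)" by simp
      have e2: "-(3/2+(\<kappa>-1/2)) = -(\<kappa>+1)" by simp
      have "x powr (1/2) = sqrt x" using True by (simp add: powr_half_sqrt)
      then show ?thesis using True unfolding e1 e2
        by (simp add: f_kappa_pos_form T0_def)
    qed simp
  qed
qed

lemma kappa_B:
  assumes k: "\<kappa> > 3/2" and T: "Teff > 0"
  shows "has_bochner_integral lborel (\<lambda>E. indicator {0<..} E * (E * f_kappa \<kappa> Teff E)) (3/2 * Teff)"
proof -
  define T0 where "T0 = (\<kappa> - 3/2) * Teff"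
  have T0: "T0 > 0" using k T by (simp add: T0_def)
  have hb: "has_bochner_integral lborel
     (\<lambda>x. Ck \<kappa> Teff * (indicator {0<..} x * (x powr (5/2-1) * (1 + x/T0) powr (-(5/2+(\<kappa>-3/2))))))
     (Ck \<kappa> Teff * (T0 powr (5/2) * Beta (5/2) (\<kappa>-3/2)))"
    by (rule has_bochner_integral_mult_right, rule beta_bochner) (use k T0 in auto)
  have val: "Ck \<kappa> Teff * (T0 powr (5/2) * Beta (5/2) (\<kappa>-3/2)) = 3/2 * Teff"
  proof -
    define G1 where "G1 = Gamma (\<kappa> + 1)"
    define G3 where "G3 = Gamma (\<kappa> - 3/2)"
    have g1: "G1 > 0" "G3 > 0" using k by (auto simp: G1_def G3_def intro: Gamma_real_pos)
    have G2: "Gamma (\<kappa> - 1/2) = (\<kappa> - 3/2) * G3"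
    proof -
      have "\<kappa> - 3/2 \<notin> \<int>\<^sub>\<le>\<^sub>0" using k nonpos_Ints_nonpos[of "\<kappa> - 3/2"] by force
      then have "Gamma (\<kappa> - 3/2 + 1) = (\<kappa> - 3/2) * Gamma (\<kappa> - 3/2)" by (rule Gamma_plus1)
      moreover have "\<kappa> - 3/2 + 1 = \<kappa> - 1/2" by simp
      ultimately show ?thesis unfolding G3_def by simp
    qed
    have p: "T0 powr (-(3/2)) * T0 powr (5/2) = T0"
    proof -
      have "T0 powr (-(3/2)) * T0 powr (5/2) = T0 powr (-(3/2) + 5/2)" by (simp only: powr_add)
      also have "-(3/2) + 5/2 = (1::real)" by simp
      finally show ?thesis using T0 by simp
    qed
    have B: "Beta (5/2) (\<kappa>-3/2) = (3/4 * sqrt pi) * (G3 / G1)"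
    proof -
      have e: "5/2 + (\<kappa> - 3/2) = \<kappa> + 1" by simp
      show ?thesis unfolding Beta_def Gamma_five_halves e G1_def G3_def by simp
    qed
    have C: "Ck \<kappa> Teff = 2 / sqrt pi * (G1 / ((\<kappa> - 3/2) * G3)) * T0 powr (-(3/2))"
      unfolding Ck_def G1_def T0_def G2 ..
    have "Ck \<kappa> Teff * (T0 powr (5/2) * Beta (5/2) (\<kappa>-3/2))
        = (2 / sqrt pi * (3/4 * sqrt pi)) * ((G1 / ((\<kappa> - 3/2) * G3)) * (G3 / G1)) * (T0 powr (-(3/2)) * T0 powr (5/2))"
      unfolding C B by (simp only: mult_ac)
    also have "\<dots> = 3/2 * (T0 / (\<kappa> - 3/2))" using g1 p k by (simp add: field_simps)
    also have "\<dots> = 3/2 * Teff" using k by (simp add: T0_def)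
    finally show ?thesis .
  qed
  show ?thesis
  proof (rule has_bochner_integral_cong[THEN iffD1, OF refl _ val hb])
    fix x :: real
    show "Ck \<kappa> Teff * (indicator {0<..} x * (x powr (5/2-1) * (1 + x/T0) powr (-(5/2+(\<kappa>-3/2)))))
       = indicator {0<..} x * (x * f_kappa \<kappa> Teff x)"
    proof (cases "x > 0")
      case True
      have e2: "-(5/2+(\<kappa>-3/2)) = -(\<kappa>+1)" by simp
      have "x powr (5/2-1) = x powr (1 + 1/2)" by simp
      also have "\<dots> = x * sqrt x" using True by (simp only: powr_add powr_half_sqrt) simp
      finally have "x powr (5/2-1) = x * sqrt x" .
      then show ?thesis using True unfolding e2
        by (simp add: f_kappa_pos_form T0_def)
    qed simp
  qed
qed

lemma mxw_A:
  assumes T: "T > 0"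
  shows "has_bochner_integral lborel (\<lambda>E. indicator {0<..} E * f_Mxw T E) 1"
proof -
  have hb: "has_bochner_integral lborel
     (\<lambda>x. Cm T * (indicator {0<..} x * (x powr (3/2-1) * exp (-x/T))))
     (Cm T * (T powr (3/2) * Gamma (3/2)))"
    by (rule has_bochner_integral_mult_right, rule gamma_bochner) (use T in auto)
  have val: "Cm T * (T powr (3/2) * Gamma (3/2)) = 1"
  proof -
    have p: "T powr (-(3/2)) * T powr (3/2) = 1" using T by (simp add: powr_add[symmetric])
    have "Cm T * (T powr (3/2) * Gamma (3/2)) = (2 / sqrt pi * (sqrt pi / 2)) * (T powr (-(3/2)) * T powr (3/2))"
      unfolding Cm_def Gamma_three_halves by (simp only: mult_ac)
    then show ?thesis using p by simp
  qed
  show ?thesis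
  proof (rule has_bochner_integral_cong[THEN iffD1, OF refl _ val hb])
    fix x :: real
    show "Cm T * (indicator {0<..} x * (x powr (3/2-1) * exp (-x/T))) = indicator {0<..} x * f_Mxw T x"
    proof (cases "x > 0")
      case True
      have e1: "3/2-1 = (1/2::real)" by simp
      have "x powr (1/2) = sqrt x" using True by (simp add: powr_half_sqrt)
      then show ?thesis using True unfolding e1 by (simp add: f_Mxw_form)
    qed simp
  qed
qed

lemma mxw_B:
  assumes T: "T > 0"
  shows "has_bochner_integral lborel (\<lambda>E. indicator {0<..} E * (E * f_Mxw T E)) (3/2 * T)"
proof -
  have hb: "has_bochner_integral lborel
     (\<lambda>x. Cm T * (indicator {0<..} x * (x powr (5/2-1) * exp (-x/T))))
     (Cm T * (T powr (5/2) * Gamma (5/2)))"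
    by (rule has_bochner_integral_mult_right, rule gamma_bochner) (use T in auto)
  have val: "Cm T * (T powr (5/2) * Gamma (5/2)) = 3/2 * T"
  proof -
    have p: "T powr (-(3/2)) * T powr (5/2) = T"
    proof -
      have "T powr (-(3/2)) * T powr (5/2) = T powr (-(3/2) + 5/2)" by (simp only: powr_add)
      also have "-(3/2) + 5/2 = (1::real)" by simp
      finally show ?thesis using T by simp
    qed
    have "Cm T * (T powr (5/2) * Gamma (5/2)) = (2 / sqrt pi * (3/4 * sqrt pi)) * (T powr (-(3/2)) * T powr (5/2))"
      unfolding Cm_def Gamma_five_halves by (simp only: mult_ac)
    then show ?thesis using p by simp
  qed
  show ?thesis
  proof (rule has_bochner_integral_cong[THEN iffD1, OF refl _ val hb])
    fix x :: real
    show "Cm T * (indicator {0<..} x * (x powr (5/2-1) * exp (-x/T))) = indicator {0<..} x * (x * f_Mxw T x)"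
    proof (cases "x > 0")
      case True
      have "x powr (5/2-1) = x powr (1 + 1/2)" by simp
      also have "\<dots> = x * sqrt x" using True by (simp only: powr_add powr_half_sqrt) simp
      finally have "x powr (5/2-1) = x * sqrt x" .
      then show ?thesis using True by (simp add: f_Mxw_form)
    qed simp
  qed
qed

lemma kappa_L:
  assumes k: "\<kappa> > 3/2" and T: "Teff > 0"
  shows "integrable lborel (\<lambda>E. indicator {0<..} E * (f_kappa \<kappa> Teff E * ln (1 + E / ((\<kappa> - 3/2) * Teff))))"
proof -
  define T0 where "T0 = (\<kappa> - 3/2) * Teff"
  have T0: "T0 > 0" using k T by (simp add: T0_def)
  have i1: "integrable lborel (\<lambda>E. (1/T0) * (indicator {0<..} E * (E * f_kappa \<kappa> Teff E)))"
    using has_bochner_integral_mult_right[OF kappa_B[OF k T], of "1/T0"]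
    by (simp add: has_bochner_integral_iff)
  have i2: "(\<lambda>E. indicator {0<..} E * (f_kappa \<kappa> Teff E * ln (1 + E / ((\<kappa> - 3/2) * Teff)))) \<in> borel_measurable lborel"
    unfolding f_kappa_def Let_def by measurable
  have i3: "AE x in lborel. norm (indicator {0<..} x * (f_kappa \<kappa> Teff x * ln (1 + x / ((\<kappa> - 3/2) * Teff))))
      \<le> norm ((1/T0) * (indicator {0<..} x * (x * f_kappa \<kappa> Teff x)))"
  proof (rule AE_I2)
    fix x :: real
    show "norm (indicator {0<..} x * (f_kappa \<kappa> Teff x * ln (1 + x / ((\<kappa> - 3/2) * Teff))))
      \<le> norm ((1/T0) * (indicator {0<..} x * (x * f_kappa \<kappa> Teff x)))"
    proof (cases "x > 0")
      case True
      have fp: "f_kappa \<kappa> Teff x \<ge> 0" using True Ck_pos[OF k T]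
        by (simp add: f_kappa_pos_form)
      have l0: "0 \<le> ln (1 + x / T0)" using True T0 by simp
      have l1: "ln (1 + x / T0) \<le> x / T0" using True T0 by (intro ln_add_one_self_le_self) simp
      have "f_kappa \<kappa> Teff x * ln (1 + x / T0) \<le> f_kappa \<kappa> Teff x * (x / T0)"
        using l1 fp by (rule mult_left_mono)
      then show ?thesis using True fp l0 T0 unfolding T0_def[symmetric]
        by (simp add: abs_mult mult_ac)
    qed simp
  qed
  show ?thesis by (rule Bochner_Integration.integrable_bound[OF i1 i2 i3])
qed

lemma ln_ratio_kappa:
  assumes k: "\<kappa> > 3/2" and Te: "Teff > 0" and T: "T > 0" and x: "x > 0"
  shows "ln (f_kappa \<kappa> Teff x / f_Mxw T x)
       = ln (Ck \<kappa> Teff / Cm T) - (\<kappa>+1) * ln (1 + x / ((\<kappa> - 3/2) * Teff)) + x / T"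
proof -
  define T0 where "T0 = (\<kappa> - 3/2) * Teff"
  have T0: "T0 > 0" using k Te by (simp add: T0_def)
  have c: "Ck \<kappa> Teff > 0" "Cm T > 0" using Ck_pos[OF k Te] Cm_pos[OF T] by auto
  have "f_kappa \<kappa> Teff x / f_Mxw T x = (Ck \<kappa> Teff / Cm T) * ((1 + x/T0) powr (-(\<kappa>+1)) * exp (x / T))"
    using x c unfolding f_kappa_pos_form[OF x] f_Mxw_form T0_def
    by (simp add: field_simps exp_minus)
  also have "ln \<dots> = ln (Ck \<kappa> Teff / Cm T) + (-(\<kappa>+1)) * ln (1 + x/T0) + x / T"
  proof -
    define A where "A = Ck \<kappa> Teff / Cm T"
    define P where "P = (1 + x/T0) powr (-(\<kappa>+1))"
    define X where "X = exp (x / T)"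
    have "x / T0 > 0" using x T0 by simp
    then have "1 + x / T0 > 0" by linarith
    then have pos: "A > 0" "P > 0" "X > 0" using c by (auto simp: A_def P_def X_def)
    have "ln (A * (P * X)) = ln A + (ln P + ln X)" using pos by (simp add: ln_mult)
    moreover have "ln P = (-(\<kappa>+1)) * ln (1 + x/T0)" by (simp add: P_def)
    moreover have "ln X = x / T" by (simp add: X_def)
    ultimately show ?thesis unfolding A_def[symmetric] P_def[symmetric] X_def[symmetric] by simp
  qed
  finally show ?thesis unfolding T0_def by (simp add: algebra_simps)
qed

lemma DKL_kappa_Mxw:
  assumes k: "\<kappa> > 3/2" and Te: "Teff > 0" and T: "T > 0"
  shows "D_KL (f_kappa \<kappa> Teff) (f_Mxw T)
       = ln (Ck \<kappa> Teff / Cm T)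
         - (\<kappa>+1) * (LINT E|lborel. indicator {0<..} E * (f_kappa \<kappa> Teff E * ln (1 + E / ((\<kappa> - 3/2) * Teff))))
         + (1/T) * (3/2 * Teff)"
proof -
  let ?L = "\<lambda>E. indicator {0<..} E * (f_kappa \<kappa> Teff E * ln (1 + E / ((\<kappa> - 3/2) * Teff)))"
  have hL: "has_bochner_integral lborel ?L (LINT E|lborel. ?L E)"
    using kappa_L[OF k Te] by (rule has_bochner_integral_integrable)
  have h: "has_bochner_integral lborel
     (\<lambda>E. ln (Ck \<kappa> Teff / Cm T) * (indicator {0<..} E * f_kappa \<kappa> Teff E)
          - (\<kappa>+1) * ?L E + (1/T) * (indicator {0<..} E * (E * f_kappa \<kappa> Teff E)))
     (ln (Ck \<kappa> Teff / Cm T) * 1 - (\<kappa>+1) * (LINT E|lborel. ?L E) + (1/T) * (3/2 * Teff))"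
    by (intro has_bochner_integral_add has_bochner_integral_diff has_bochner_integral_mult_right
          kappa_A[OF k Te] kappa_B[OF k Te] hL)
  have h2: "has_bochner_integral lborel
     (\<lambda>E. indicator {0<..} E *\<^sub>R (f_kappa \<kappa> Teff E * ln (f_kappa \<kappa> Teff E / f_Mxw T E)))
     (ln (Ck \<kappa> Teff / Cm T) * 1 - (\<kappa>+1) * (LINT E|lborel. ?L E) + (1/T) * (3/2 * Teff))"
  proof (rule has_bochner_integral_cong[THEN iffD1, OF refl _ refl h])
    fix x :: real
    show "ln (Ck \<kappa> Teff / Cm T) * (indicator {0<..} x * f_kappa \<kappa> Teff x)
          - (\<kappa>+1) * ?L x + (1/T) * (indicator {0<..} x * (x * f_kappa \<kappa> Teff x))
        = indicator {0<..} x *\<^sub>R (f_kappa \<kappa> Teff x * ln (f_kappa \<kappa> Teff x / f_Mxw T x))"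
    proof (cases "x > 0")
      case True
      show ?thesis using True unfolding ln_ratio_kappa[OF k Te T True]
        by (simp add: algebra_simps)
    qed simp
  qed
  show ?thesis unfolding D_KL_def set_lebesgue_integral_def
    using has_bochner_integral_integral_eq[OF h2] by simp
qed

lemma DKL_Mxw_Mxw:
  assumes T1: "T1 > 0" and T2: "T2 > 0"
  shows "D_KL (f_Mxw T1) (f_Mxw T2) = ln (Cm T1 / Cm T2) + (1/T2 - 1/T1) * (3/2 * T1)"
proof -
  have c: "Cm T1 > 0" "Cm T2 > 0" using Cm_pos T1 T2 by auto
  have h: "has_bochner_integral lborel
     (\<lambda>E. ln (Cm T1 / Cm T2) * (indicator {0<..} E * f_Mxw T1 E)
          + (1/T2 - 1/T1) * (indicator {0<..} E * (E * f_Mxw T1 E)))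
     (ln (Cm T1 / Cm T2) * 1 + (1/T2 - 1/T1) * (3/2 * T1))"
    by (intro has_bochner_integral_add has_bochner_integral_mult_right mxw_A[OF T1] mxw_B[OF T1])
  have h2: "has_bochner_integral lborel
     (\<lambda>E. indicator {0<..} E *\<^sub>R (f_Mxw T1 E * ln (f_Mxw T1 E / f_Mxw T2 E)))
     (ln (Cm T1 / Cm T2) * 1 + (1/T2 - 1/T1) * (3/2 * T1))"
  proof (rule has_bochner_integral_cong[THEN iffD1, OF refl _ refl h])
    fix x :: real
    show "ln (Cm T1 / Cm T2) * (indicator {0<..} x * f_Mxw T1 x)
          + (1/T2 - 1/T1) * (indicator {0<..} x * (x * f_Mxw T1 x))
        = indicator {0<..} x *\<^sub>R (f_Mxw T1 x * ln (f_Mxw T1 x / f_Mxw T2 x))"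
    proof (cases "x > 0")
      case True
      have "f_Mxw T1 x / f_Mxw T2 x = (Cm T1 / Cm T2) * (exp (- x / T1) / exp (- x / T2))"
        using True c unfolding f_Mxw_form by (simp add: field_simps)
      then have lr: "ln (f_Mxw T1 x / f_Mxw T2 x) = ln (Cm T1 / Cm T2) + (- x / T1 - (- x / T2))"
        using c by (simp add: ln_mult ln_div)
      show ?thesis using True unfolding lr by (simp add: algebra_simps)
    qed simp
  qed
  show ?thesis unfolding D_KL_def set_lebesgue_integral_def
    using has_bochner_integral_integral_eq[OF h2] by simp
qed

lemma ln_Cm_ratio:
  assumes "T1 > 0" "T2 > 0"
  shows "ln (Cm T1 / Cm T2) = -(3/2) * ln (T1 / T2)"
proof -
  have "Cm T1 / Cm T2 = T1 powr (-(3/2)) / T2 powr (-(3/2))"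
    unfolding Cm_def by simp
  also have "\<dots> = (T1 / T2) powr (-(3/2))" using assms by (simp add: powr_divide)
  finally show ?thesis by simp
qed

theorem mainTheorem2:
  fixes \<kappa> Teff :: real
  assumes "\<kappa> > 3/2" and "Teff > 0"
  defines "Tcore \<equiv> (\<kappa> - 3/2) / \<kappa> * Teff"
      and "R0 \<equiv> \<kappa> / (\<kappa> - 3/2)"
  defines "\<Delta> \<equiv> D_KL (f_kappa \<kappa> Teff) (f_Mxw Tcore) - D_KL (f_kappa \<kappa> Teff) (f_Mxw Teff)"
  shows "\<Delta> = 3/2 * (R0 - ln R0 - 1) \<and> \<Delta> = 3/2 * d_IS Teff Tcore
         \<and> \<Delta> = D_KL (f_Mxw Teff) (f_Mxw Tcore)"
proof -
  note k = assms(1) and Te = assms(2)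
  have Tc: "Tcore > 0" using k Te unfolding Tcore_def by (auto intro!: mult_pos_pos divide_pos_pos)
  have R: "Teff / Tcore = R0" using k Te unfolding Tcore_def R0_def by (simp add: field_simps)
  have ck: "Ck \<kappa> Teff > 0" by (rule Ck_pos[OF k Te])
  have cm: "Cm Tcore > 0" "Cm Teff > 0" using Cm_pos Tc Te by auto
  have lnd: "ln (Ck \<kappa> Teff / Cm Tcore) - ln (Ck \<kappa> Teff / Cm Teff) = ln (Cm Teff / Cm Tcore)"
    using ck cm by (simp add: ln_div)
  have L: "ln (Cm Teff / Cm Tcore) = -(3/2) * ln R0" using ln_Cm_ratio[OF Te Tc] R by simp
  have "\<Delta> = ln (Cm Teff / Cm Tcore) + 3/2 * (Teff / Tcore) - 3/2"
    unfolding \<Delta>_def DKL_kappa_Mxw[OF k Te Tc] DKL_kappa_Mxw[OF k Te Te] lnd[symmetric]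
    using Te by (simp add: field_simps)
  then have D: "\<Delta> = 3/2 * (R0 - ln R0 - 1)" unfolding L R by (simp add: algebra_simps)
  moreover have "3/2 * d_IS Teff Tcore = 3/2 * (R0 - ln R0 - 1)" unfolding d_IS_def R ..
  moreover have "D_KL (f_Mxw Teff) (f_Mxw Tcore) = 3/2 * (R0 - ln R0 - 1)"
  proof -
    have "D_KL (f_Mxw Teff) (f_Mxw Tcore) = ln (Cm Teff / Cm Tcore) + 3/2 * (Teff / Tcore) - 3/2"
      unfolding DKL_Mxw_Mxw[OF Te Tc] using Te Tc by (simp add: field_simps)
    then show ?thesis unfolding L R by (simp add: algebra_simps)
  qed
  ultimately show ?thesis by simp
qed

end
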